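(* Let $K,F,Z,S$ be positive integers and let $\mathbf{P}=(p_{j,k})_{0\le j<F,\,0\le k<K}$ be a $(K,F,Z,S)$ placement delivery array. Suppose there is an integer $Z'$ such that every column of $\mathbf{P}$ contains exactly $Z'$ useless stars. Then, for any number $N$ of files, there exists an $(F-Z')$-division $(K,M,N)$ coded caching scheme with memory ratio $\frac{M}{N}=\frac{Z-Z'}{F-Z'}$ and transmission rate $R=\frac{S}{F-Z'}$. Moreover, its delivery consists of $S$ transmissions indexed by $s\in[0,S)$, each of the size of one packet, and the coded gain at each time slot $s$ is the same as in the scheme obtained from $\mathbf{P}$ by the standard PDA scheme; that is, transmission $s$ is the XOR of coded packets each of which is needed by a different user, and it simultaneously serves exactly as many users as the number of occurrences of the integer $s$ in $\mathbf{P}$.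
   Context: Notation: $[0,m)=\{0,1,\dots,m-1\}$. Placement delivery array (PDA): for positive integers $K,F,Z,S$, an $F\times K$ array $\mathbf{P}=(p_{j,k})$, $0\le j<F$, $0\le k<K$, whose entries are either a special symbol $*$ or integers in $[0,S)$, is a $(K,F,Z,S)$ PDA if (C1) the symbol $*$ appears exactly $Z$ times in each column; (C2) each integer in $[0,S)$ occurs at least once in the array; (C3) for any two distinct entries $p_{j_1,k_1}$ and $p_{j_2,k_2}$, $p_{j_1,k_1}=p_{j_2,k_2}=s$ with $s$ an integer only if $j_1\ne j_2$, $k_1\ne k_2$ and $p_{j_1,k_2}=p_{j_2,k_1}=*$. Useful/useless stars: a star entry $p_{j,k}=*$ is useful if there exist an integer $s\in[0,S)$, a column $k'$ with $p_{j,k'}=s$ and a row $j'$ with $p_{j',k}=s$ (i.e. the star lies in the square subarray formed by the rows and columns of the occurrences of $s$); otherwise it is useless. Standard PDA scheme: each file is split into $F$ packets $W_{n,j}$, $j\in[0,F)$; user $k$ caches $W_{n,j}$ for all $n$ and all $j$ with $p_{j,k}=*$; for demand vector $\mathbf{d}$, at time slot $s\in[0,S)$ the server sends $\bigoplus_{p_{j,k}=s}W_{d_k,j}$. The number of occurrences of $s$ in $\mathbf{P}$ is called the coded gain at time slot $s$. Coded caching model: a server holds $N$ files $W_0,\dots,W_{N-1}$ of equal size, connected by a shared error-free broadcast link to $K$ users, each with a cache of size $M$ files. An $F$-division $(K,M,N)$ coded caching scheme consists of: (placement) each file is split into $F$ equal-size packets and each user $k$ stores content $\mathcal{Z}_k$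 (packets or coded combinations of packets, possibly over a finite field) of total size at most $M$ files, without knowledge of the demands; (delivery) for each demand vector $\mathbf{d}=(d_0,\dots,d_{K-1})\in[0,N)^K$ (user $k$ requests $W_{d_k}$), the server broadcasts a signal of size $R_{\mathbf{d}}$ files such that every user $k$ can recover $W_{d_k}$ from the signal and $\mathcal{Z}_k$. The memory ratio is $M/N$ and the transmission rate is $R=\max_{\mathbf{d}}R_{\mathbf{d}}$. *)

theory Defs
  imports Complex_Main
begin

text \<open>A PDA is an F x K array; entry P j k (row j < F, column k < K) is
  None for the star symbol and Some s for the integer s.\<close>

definition is_PDA :: "nat \<Rightarrow> nat \<Rightarrow> nat \<Rightarrow> nat \<Rightarrow> (nat \<Rightarrow> nat \<Rightarrow> nat option) \<Rightarrow> bool" where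
  "is_PDA K F Z S P \<longleftrightarrow>
     (\<forall>j<F. \<forall>k<K. \<forall>s. P j k = Some s \<longrightarrow> s < S) \<and>
     (\<forall>k<K. card {j. j < F \<and> P j k = None} = Z) \<and>
     (\<forall>s<S. \<exists>j<F. \<exists>k<K. P j k = Some s) \<and>
     (\<forall>j1<F. \<forall>k1<K. \<forall>j2<F. \<forall>k2<K. \<forall>s.
        (j1, k1) \<noteq> (j2, k2) \<and> P j1 k1 = Some s \<and> P j2 k2 = Some s \<longrightarrow>
        j1 \<noteq> j2 \<and> k1 \<noteq> k2 \<and> P j1 k2 = None \<and> P j2 k1 = None)"

definition useful_star :: "nat \<Rightarrow> nat \<Rightarrow> nat \<Rightarrow> (nat \<Rightarrow> nat \<Rightarrow> nat option) \<Rightarrow> nat \<Rightarrow> nat \<Rightarrow> bool" where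
  "useful_star K F S P j k \<longleftrightarrow> P j k = None \<and>
     (\<exists>s<S. (\<exists>k'<K. P j k' = Some s) \<and> (\<exists>j'<F. P j' k = Some s))"

definition useless_star :: "nat \<Rightarrow> nat \<Rightarrow> nat \<Rightarrow> (nat \<Rightarrow> nat \<Rightarrow> nat option) \<Rightarrow> nat \<Rightarrow> nat \<Rightarrow> bool" where
  "useless_star K F S P j k \<longleftrightarrow> P j k = None \<and> \<not> useful_star K F S P j k"

text \<open>Number of occurrences of the integer s in P (the coded gain at time slot s
  in the standard PDA scheme).\<close>
definition occurrences :: "nat \<Rightarrow> nat \<Rightarrow> (nat \<Rightarrow> nat \<Rightarrow> nat option) \<Rightarrow> nat \<Rightarrow> nat" where
  "occurrences K F P s = card {(j, k). j < F \<and> k < K \<and> P j k = Some s}"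

text \<open>A packet consists of B bits (bits with index >= B are ignored, see trunc).
  A file (type pfile) is a sequence of packets (packet index => packet); only packets with
  index < Fd (the division number) belong to the file. A library is a sequence of
  files; only files with index < N belong to it.\<close>

type_synonym packet = "nat \<Rightarrow> bool"
type_synonym pfile = "nat \<Rightarrow> packet"
type_synonym library = "nat \<Rightarrow> pfile"

definition trunc :: "nat \<Rightarrow> packet \<Rightarrow> packet" where
  "trunc B p = (\<lambda>b. if b < B then p b else False)"

definition xor_sum :: "nat set \<Rightarrow> (nat \<Rightarrow> packet) \<Rightarrow> packet" where
  "xor_sum U f = (\<lambda>b. odd (card {k \<in> U. f k b}))"

definition file_eq :: "nat \<Rightarrow> nat \<Rightarrow> pfile \<Rightarrow> pfile \<Rightarrow> bool" where
  "file_eq Fd B w w' \<longleftrightarrow> (\<forall>j<Fd. \<forall>b<B. w j b = w' j b)"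

text \<open>The cache of a user is a list of stored packet-sized items; each item is a
  (coded) packet computed from one file n, i.e. a pair (n, g) with g a function
  from files to packets.\<close>
type_synonym cache_item = "nat \<times> (pfile \<Rightarrow> packet)"

definition cache_view :: "nat \<Rightarrow> cache_item list \<Rightarrow> library \<Rightarrow> packet list" where
  "cache_view B Zk W = map (\<lambda>(n, g). trunc B (g (W n))) Zk"

text \<open>Delivery: for demand vector d, tr d s W (s < S) is the s-th transmitted
  packet (B bits); the whole signal has size S packets = S / Fd files.\<close>
definition signal_view :: "nat \<Rightarrow> nat \<Rightarrow> (nat \<Rightarrow> library \<Rightarrow> packet) \<Rightarrow> library \<Rightarrow> packet list" where
  "signal_view B S t W = map (\<lambda>s. trunc B (t s W)) [0..<S]"

definition valid_demand :: "nat \<Rightarrow> nat \<Rightarrow> (nat \<Rightarrow> nat) \<Rightarrow> bool" where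
  "valid_demand K N d \<longleftrightarrow> (\<forall>k<K. d k < N)"

text \<open>An Fd-division (K,M,N) coded caching scheme with packets of B bits, whose
  delivery for every demand consists of S packet-sized transmissions (hence rate
  R = S / Fd). Every user k recovers its requested file from its cache and the
  signal: any two libraries giving the same cache content and the same signal
  agree on the requested file.\<close>
definition coded_caching_scheme ::
  "nat \<Rightarrow> real \<Rightarrow> nat \<Rightarrow> nat \<Rightarrow> nat \<Rightarrow> nat \<Rightarrow> (nat \<Rightarrow> cache_item list)
     \<Rightarrow> ((nat \<Rightarrow> nat) \<Rightarrow> nat \<Rightarrow> library \<Rightarrow> packet) \<Rightarrow> bool" where
  "coded_caching_scheme K M N Fd B S cache tr \<longleftrightarrow>
     0 < Fd \<and> 0 < B \<and>
     (\<forall>k<K. \<forall>(n, g) \<in> set (cache k). n < N) \<and>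
     (\<forall>k<K. real (length (cache k)) \<le> M * real Fd) \<and>
     (\<forall>d. valid_demand K N d \<longrightarrow> (\<forall>k<K. \<forall>W W'.
        cache_view B (cache k) W = cache_view B (cache k) W' \<and>
        signal_view B S (tr d) W = signal_view B S (tr d) W'
        \<longrightarrow> file_eq Fd B (W (d k)) (W' (d k))))"

definition transmission_rate :: "nat \<Rightarrow> nat \<Rightarrow> real" where
  "transmission_rate Fd S = real S / real Fd"

text \<open>XOR structure of the delivery: transmission s is the XOR of coded packets
  c k (W (d k)) (a packet computed from the file requested by user k), one for each
  user k of a set U of users with card U = gain s; each such coded packet is needed
  by its user (not determined by the user's cache) while every other user of U can
  compute it from its own cache.\<close>
definition xor_delivery ::
  "nat \<Rightarrow> nat \<Rightarrow> nat \<Rightarrow> nat \<Rightarrow> (nat \<Rightarrow> cache_item list)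
     \<Rightarrow> ((nat \<Rightarrow> nat) \<Rightarrow> nat \<Rightarrow> library \<Rightarrow> packet) \<Rightarrow> (nat \<Rightarrow> nat) \<Rightarrow> bool" where
  "xor_delivery K N B S cache tr gain \<longleftrightarrow>
     (\<forall>d. valid_demand K N d \<longrightarrow> (\<forall>s<S. \<exists>U (c :: nat \<Rightarrow> pfile \<Rightarrow> packet).
        U \<subseteq> {..<K} \<and> card U = gain s \<and>
        (\<forall>W. trunc B (tr d s W) = trunc B (xor_sum U (\<lambda>k. c k (W (d k))))) \<and>
        (\<forall>k\<in>U. \<exists>W W'. cache_view B (cache k) W = cache_view B (cache k) W' \<and>
                        trunc B (c k (W (d k))) \<noteq> trunc B (c k (W' (d k)))) \<and>
        (\<forall>k\<in>U. \<forall>k'\<in>U. k' \<noteq> k \<longrightarrow> (\<forall>W W'.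
            cache_view B (cache k) W = cache_view B (cache k) W' \<longrightarrow>
            trunc B (c k' (W (d k'))) = trunc B (c k' (W' (d k')))))))"

end

theory Submission
  imports Defs "HOL-Algebra.Algebraic_Closure_Type" "HOL-Library.Z2"
begin


type_synonym L = "bit alg_closure"

lemma CHAR_bit: "CHAR(bit) = 2"
proof (rule CHAR_eqI)
  show "of_nat 2 = (0::bit)" by simp
  fix n assume "of_nat n = (0::bit)"
  thus "2 dvd n"
  proof (induction n rule: nat_less_induct)
    case (1 n)
    show ?case
    proof (cases n)
      case 0 then show ?thesis by simp
    next
      case (Suc n1) show ?thesis
      proof (cases n1)
        case 0 then show ?thesis using 1 Suc by simp
      next
        case (Suc n2)
        have "of_nat n = (of_nat n2 :: bit) + 2" using Suc \<open>n = Suc n1\<close> by simp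
        then have "of_nat n2 = (0::bit)" using 1 by simp
        then have "2 dvd n2" using 1 Suc \<open>n = Suc n1\<close> by auto
        then show ?thesis using Suc \<open>n = Suc n1\<close> by simp
      qed
    qed
  qed
qed

lemma CHAR_L: "CHAR(L) = 2" by (simp add: CHAR_bit)

lemma two_L: "(2::L) = 0"
  by (metis CHAR_L of_nat_CHAR of_nat_numeral)

lemma neg_L: "- (x::L) = x"
proof -
  have "x + x = 2 * x" by simp
  also have "\<dots> = 0" by (simp add: two_L)
  finally show ?thesis by (metis add_eq_0_iff)
qed

definition Efld :: "nat \<Rightarrow> L set" where "Efld m = {x. x ^ (2^m) = x}"

lemma E_add: "a \<in> Efld m \<Longrightarrow> b \<in> Efld m \<Longrightarrow> a + b \<in> Efld m"
  unfolding Efld_def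
  using freshmans_dream'[of "2^m" m a b] CHAR_L by simp

lemma E_mult: "a \<in> Efld m \<Longrightarrow> b \<in> Efld m \<Longrightarrow> a * b \<in> Efld m"
  unfolding Efld_def by (simp add: power_mult_distrib)

lemma E_0: "0 \<in> Efld m" unfolding Efld_def by simp
lemma E_1: "1 \<in> Efld m" unfolding Efld_def by simp
lemma E_neg: "a \<in> Efld m \<Longrightarrow> - a \<in> Efld m" by (simp add: neg_L)

lemma E_sum: "(\<And>i. i \<in> A \<Longrightarrow> f i \<in> Efld m) \<Longrightarrow> sum f A \<in> Efld m"
  by (induction A rule: infinite_finite_induct) (auto intro: E_add E_0)

lemma E_prod: "(\<And>i. i \<in> A \<Longrightarrow> f i \<in> Efld m) \<Longrightarrow> prod f A \<in> Efld m"
  by (induction A rule: infinite_finite_induct) (auto intro: E_mult E_1)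

lemma E_power: "a \<in> Efld m \<Longrightarrow> a ^ n \<in> Efld m"
  by (induction n) (auto intro: E_mult E_1)

lemma card_E: assumes "m > 0" shows "card (Efld m) = 2 ^ m"
proof -
  define n where "n = (2::nat) ^ m"
  have n2: "n \<ge> 2"
  proof -
    have "(2::nat)^1 \<le> 2^m" using assms by (intro power_increasing) auto
    then show ?thesis unfolding n_def by simp
  qed
  define p :: "L poly" where "p = monom 1 n + [:0,-1:]"
  have deg: "degree p = n" unfolding p_def using n2
    by (subst degree_add_eq_left) (auto simp: degree_monom_eq)
  have "p \<noteq> 0" using deg n2 by auto
  have lc: "lead_coeff p = 1" using deg n2 unfolding p_def by (auto simp: coeff_monom coeff_pCons split: nat.split)
  have polyp: "poly p x = x ^ n - x" for x unfolding p_def by (simp add: poly_monom)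
  obtain A where A: "size A = n" "p = smult 1 (\<Prod>x\<in>#A. [:-x, 1:])"
    using alg_closed_imp_factorization[OF \<open>p \<noteq> 0\<close>] deg lc by auto
  have pA: "p = (\<Prod>x\<in>#A. [:-x, 1:])" using A by simp
  have roots: "poly p x = 0 \<longleftrightarrow> x \<in># A" for x
    unfolding pA poly_prod_mset by (force simp add: prod_mset_zero_iff)
  have pd: "pderiv p = - 1"
    proof -
    have m1: "(- 1 :: L poly) = [:-1:]" by (metis minus_pCons minus_zero one_pCons)
    show ?thesis unfolding p_def m1 using n2 assms by (simp add: pderiv_add pderiv_monom pderiv_pCons n_def two_L power_0_left)
  qed
  have cnt: "count A a \<le> 1" for a
  proof (rule ccontr)
    assume "\<not> count A a \<le> 1"
    then have "count A a \<ge> 2" by simp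
    then obtain A1 where A1: "A = add_mset a A1" by (metis multi_member_split count_inI not_numeral_le_zero)
    then have "count A1 a \<ge> 1" using \<open>count A a \<ge> 2\<close> by simp
    then obtain A' where "A1 = add_mset a A'" by (metis multi_member_split count_inI not_one_le_zero)
    then have "A = add_mset a (add_mset a A')" using A1 by simp
    then have peq: "p = [:-a,1:] * ([:-a,1:] * (\<Prod>x\<in>#A'. [:-x, 1:]))" using pA by simp
    moreover have gen: "poly r a = 0 \<Longrightarrow> poly (pderiv (r * (r * q))) a = 0" for r q :: "L poly"
      by (simp add: pderiv_mult)
    have "poly [:-a,1:] a = 0" by simp
    from gen[OF this] have "poly (pderiv ([:-a,1:] * ([:-a,1:] * (\<Prod>x\<in>#A'. [:-x, 1:])))) a = 0" .
    with peq have "poly (pderiv p) a = 0" by simp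
    then show False using pd by simp
  qed
  have "A = mset_set (set_mset A)"
  proof (rule multiset_eqI)
    fix x
    have "count (mset_set (set_mset A)) x = (if x \<in># A then 1 else 0)"
      by (simp add: count_mset_set)
    then show "count A x = count (mset_set (set_mset A)) x"
      using cnt[of x] by (auto simp: count_eq_zero_iff intro: le_antisym)
  qed
  then have "card (set_mset A) = n" using A(1) by (metis size_mset_set)
  moreover have "Efld m = set_mset A"
    unfolding Efld_def using roots polyp n_def by auto
  ultimately show ?thesis using n_def by simp
qed



definition Tset :: "nat \<Rightarrow> packet set" where "Tset B = {p. \<forall>b. B \<le> b \<longrightarrow> \<not> p b}"

lemma card_Tset: "card (Tset B) = 2 ^ B"
proof -
  have "bij_betw (\<lambda>A b. b \<in> A) (Pow {..<B}) (Tset B)"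
  proof (rule bij_betwI[where g="\<lambda>p. {b. p b}"])
    show "(\<lambda>A b. b \<in> A) \<in> Pow {..<B} \<rightarrow> Tset B" by (auto simp: Tset_def)
    show "(\<lambda>p. {b. p b}) \<in> Tset B \<rightarrow> Pow {..<B}" by (auto simp: Tset_def not_le[symmetric])
  qed (auto simp: Tset_def)
  then have "card (Tset B) = card (Pow {..<B})" by (metis bij_betw_same_card)
  then show ?thesis by (simp add: card_Pow)
qed

lemma finite_Tset: "finite (Tset B)"
  using card_Tset[of B] by (metis card_ge_0_finite zero_less_numeral zero_less_power)

lemma trunc_in_Tset: "trunc B p \<in> Tset B" by (simp add: Tset_def trunc_def)

lemma trunc_Tset: "p \<in> Tset B \<Longrightarrow> trunc B p = p"
  by (auto simp: Tset_def trunc_def fun_eq_iff)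

lemma finite_E: "m > 0 \<Longrightarrow> finite (Efld m)"
  using card_E by (metis card_ge_0_finite zero_less_numeral zero_less_power)

lemma coeff_mult_E:
  assumes "\<And>n. coeff p n \<in> Efld m" "\<And>n. coeff q n \<in> Efld m"
  shows "coeff (p * q) n \<in> Efld m"
  unfolding coeff_mult by (intro E_sum E_mult assms)

lemma coeff_prod_E:
  fixes \<alpha> :: "nat \<Rightarrow> L"
  assumes "\<And>i. i \<in> A \<Longrightarrow> \<alpha> i \<in> Efld m"
  shows "coeff (\<Prod>i\<in>A. [:- \<alpha> i, 1:]) n \<in> Efld m"
  using assms
proof (induction A arbitrary: n rule: infinite_finite_induct)
  case (infinite A) then show ?case by (simp add: E_1 E_0 coeff_1)
next
  case empty then show ?case by (simp add: E_1 E_0 coeff_1)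
next
  case (insert x F)
  have c1: "coeff [:- \<alpha> x, 1:] k \<in> Efld m" for k
    using insert.prems by (auto simp: coeff_pCons E_0 E_1 E_neg split: nat.split)
  have eq: "(\<Prod>i\<in>insert x F. [:- \<alpha> i, 1:]) = [:- \<alpha> x, 1:] * (\<Prod>i\<in>F. [:- \<alpha> i, 1:])"
    using insert(1,2) by simp
  have ih: "coeff (\<Prod>i\<in>F. [:- \<alpha> i, 1:]) k \<in> Efld m" for k
    using insert.IH insert.prems by blast
  show ?case unfolding eq by (rule coeff_mult_E[OF c1 ih])
qed

lemma mds_exists:
  assumes "0 < F"
  shows "\<exists>B (v :: nat \<Rightarrow> pfile \<Rightarrow> packet). 0 < B \<and> (\<forall>j w. trunc B (v j w) = v j w) \<and>
     (\<forall>R w w'. R \<subseteq> {..<F} \<longrightarrow> card R = Fd \<longrightarrow> (\<forall>j\<in>R. v j w = v j w') \<longrightarrow> file_eq Fd B w w') \<and>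
     (\<forall>Sx j0. Sx \<subseteq> {..<F} \<longrightarrow> j0 < F \<longrightarrow> j0 \<notin> Sx \<longrightarrow> card Sx < Fd \<longrightarrow>
        (\<exists>w w'. (\<forall>j\<in>Sx. v j w = v j w') \<and> v j0 w \<noteq> v j0 w'))"
proof -
  define B where "B = F"
  have B0: "0 < B" using assms B_def by simp
  define E where "E = Efld B"
  have finE: "finite E" using finite_E[OF B0] E_def by simp
  have cardE: "card E = 2 ^ B" using card_E[OF B0] E_def by simp
  have cEq: "card E = card (Tset B)" using cardE card_Tset by simp
  obtain enc where enc: "bij_betw enc E (Tset B)"
    using finite_same_card_bij[OF finE finite_Tset cEq] by blast
  have encT: "e \<in> E \<Longrightarrow> enc e \<in> Tset B" for e by (rule bij_betw_apply[OF enc])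
  have encinj: "e \<in> E \<Longrightarrow> e' \<in> E \<Longrightarrow> enc e = enc e' \<longleftrightarrow> e = e'" for e e'
    by (rule inj_on_eq_iff[OF bij_betw_imp_inj_on[OF enc]])
  have encimg: "enc ` E = Tset B" using enc by (simp add: bij_betw_def)
  define dec where "dec p = inv_into E enc (trunc B p)" for p
  have decE: "dec p \<in> E" for p
    unfolding dec_def by (rule inv_into_into) (simp add: encimg trunc_in_Tset)
  have encdec: "enc (dec p) = trunc B p" for p
    unfolding dec_def by (rule f_inv_into_f) (simp add: encimg trunc_in_Tset)
  have decenc: "e \<in> E \<Longrightarrow> dec (enc e) = e" for e
    unfolding dec_def using trunc_Tset[OF encT] enc
    by (simp add: bij_betw_def inv_into_f_f)
  have "card {..<F} \<le> card E" using cardE B_def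
    by (simp add: less_imp_le_nat less_exp)
  then obtain \<alpha>0 where \<alpha>0: "\<alpha>0 ` {..<F} \<subseteq> E" "inj_on \<alpha>0 {..<F}"
    using card_le_inj[OF _ finE] by blast
  define \<alpha> where "\<alpha> j = (if j < F then \<alpha>0 j else 0)" for j
  have \<alpha>E: "\<alpha> j \<in> E" for j using \<alpha>0 E_0 E_def unfolding \<alpha>_def by auto
  have \<alpha>inj: "inj_on \<alpha> {..<F}" using \<alpha>0(2) unfolding \<alpha>_def inj_on_def by auto
  define val where "val j w = (\<Sum>i<Fd. dec (w i) * \<alpha> j ^ i)" for j w
  have valE: "val j w \<in> E" for j w
    unfolding val_def E_def by (intro E_sum E_mult E_power) (auto simp: decE[unfolded E_def] \<alpha>E[unfolded E_def])
  define v where "v j w = enc (val j w)" for j w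
  have A: "trunc B (v j w) = v j w" for j w
    unfolding v_def by (rule trunc_Tset[OF encT[OF valE]])
  have C: "file_eq Fd B w w'" if R: "R \<subseteq> {..<F}" "card R = Fd" "\<forall>j\<in>R. v j w = v j w'" for R w w'
  proof (cases "Fd = 0")
    case True then show ?thesis by (simp add: file_eq_def)
  next
    case False
    define p where "p = (\<Sum>i<Fd. monom (dec (w i) - dec (w' i)) i)"
    have degp: "degree p \<le> Fd - 1" unfolding p_def
      by (rule degree_sum_le) (auto intro: order.trans[OF degree_monom_le])
    have polyp: "poly p x = val j w - val j w'" if "x = \<alpha> j" for x j
      unfolding p_def val_def that by (simp add: poly_sum poly_monom sum_subtractf algebra_simps)
    have roots: "\<alpha> ` R \<subseteq> {x. poly p x = 0}"
    proof
      fix x assume "x \<in> \<alpha> ` R"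
      then obtain j where j: "j \<in> R" "x = \<alpha> j" by auto
      then have "val j w = val j w'" using R(3) encinj[OF valE valE] unfolding v_def by blast
      then show "x \<in> {x. poly p x = 0}" using polyp[OF j(2)] by simp
    qed
    have "p = 0"
    proof (rule ccontr)
      assume "p \<noteq> 0"
      have cR: "card (\<alpha> ` R) = Fd" using R \<alpha>inj by (metis card_image inj_on_subset)
      have "card (\<alpha> ` R) \<le> card {x. poly p x = 0}"
        using roots poly_roots_finite[OF \<open>p \<noteq> 0\<close>] by (metis card_mono)
      also have "\<dots> \<le> degree p" by (rule card_poly_roots_bound[OF \<open>p \<noteq> 0\<close>])
      finally show False using degp False cR by simp
    qed
    have "dec (w i) = dec (w' i)" if "i < Fd" for i
    proof -
      have "coeff p i = dec (w i) - dec (w' i)"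
        unfolding p_def coeff_sum using that by (simp add: coeff_monom)
      then show ?thesis using \<open>p = 0\<close> by simp
    qed
    then have "trunc B (w i) = trunc B (w' i)" if "i < Fd" for i
      using that encdec by metis
    then show ?thesis unfolding file_eq_def trunc_def by (metis)
  qed
  have D: "\<exists>w w'. (\<forall>j\<in>Sx. v j w = v j w') \<and> v j0 w \<noteq> v j0 w'"
    if Sx: "Sx \<subseteq> {..<F}" "j0 < F" "j0 \<notin> Sx" "card Sx < Fd" for Sx j0
  proof -
    define q where "q = (\<Prod>i\<in>Sx. [:- \<alpha> i, 1:])"
    have finS: "finite Sx" using Sx(1) finite_subset by blast
    have degq: "degree q = card Sx" unfolding q_def
      by (subst degree_prod_eq_sum_degree) auto
    have cqE: "coeff q n \<in> E" for n unfolding q_def E_def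
      by (rule coeff_prod_E) (simp add: \<alpha>E[unfolded E_def])
    define w where "w i = enc (coeff q i)" for i
    define w' where "w' (i::nat) = enc 0" for i
    have vw: "val j w = poly q (\<alpha> j)" for j
    proof -
      have "val j w = (\<Sum>i<Fd. coeff q i * \<alpha> j ^ i)"
        unfolding val_def w_def using decenc[OF cqE] by simp
      also have "\<dots> = (\<Sum>i\<le>degree q. coeff q i * \<alpha> j ^ i)"
      proof (rule sum.mono_neutral_right)
        show "{..degree q} \<subseteq> {..<Fd}" using degq Sx(4) by auto
      qed (auto simp: coeff_eq_0)
      finally show ?thesis by (simp add: poly_altdef)
    qed
    have vw': "val j w' = 0" for j
      unfolding val_def w'_def using decenc[OF E_0[of B, folded E_def]] by simp
    have "\<forall>j\<in>Sx. v j w = v j w'"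
      unfolding v_def vw vw' q_def using finS
      by (auto simp: poly_prod intro!: arg_cong[where f=enc] prod_zero)
    moreover have "v j0 w \<noteq> v j0 w'"
    proof -
      have pq: "poly q (\<alpha> j0) = (\<Prod>i\<in>Sx. \<alpha> j0 - \<alpha> i)"
        unfolding q_def poly_prod by simp
      have "poly q (\<alpha> j0) \<noteq> 0" unfolding pq using finS Sx \<alpha>inj
        by (subst prod_zero_iff) (auto simp: inj_on_def)
      moreover have "poly q (\<alpha> j0) \<in> E" unfolding pq E_def
        by (intro E_prod) (metis E_add E_neg \<alpha>E[unfolded E_def] diff_conv_add_uminus)
      ultimately show ?thesis unfolding v_def vw vw' using encinj E_0[of B, folded E_def] by simp
    qed
    ultimately show ?thesis by blast
  qed
  show ?thesis
    apply (rule exI[of _ B], rule exI[of _ v])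
    using B0 A C D by blast
qed



lemma xor_cancel:
  assumes "finite U" "k0 \<in> U" "\<And>k. k \<in> U \<Longrightarrow> k \<noteq> k0 \<Longrightarrow> f k = g k"
    and "trunc B (xor_sum U f) = trunc B (xor_sum U g)"
  shows "trunc B (f k0) = trunc B (g k0)"
proof -
  have "f k0 b = g k0 b" if "b < B" for b
  proof -
    have x: "odd (card {k \<in> U. f k b}) = odd (card {k \<in> U. g k b})"
      using assms(4) that unfolding trunc_def xor_sum_def by (metis (mono_tags))
    have eqr: "{k \<in> U - {k0}. f k b} = {k \<in> U - {k0}. g k b}" using assms(3) by auto
    have split: "card {k \<in> U. h k b} = card {k \<in> U - {k0}. h k b} + (if h k0 b then 1 else 0)" for h :: "nat \<Rightarrow> packet"
    proof -
      have fin: "finite {k \<in> U - {k0}. h k b}" using assms(1) by auto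
      show ?thesis
      proof (cases "h k0 b")
        case True
        then have "{k \<in> U. h k b} = insert k0 {k \<in> U - {k0}. h k b}" using assms(2) by auto
        then show ?thesis using fin True by simp
      next
        case False
        then have "{k \<in> U. h k b} = {k \<in> U - {k0}. h k b}" by auto
        then show ?thesis using False by simp
      qed
    qed
    show ?thesis using x split[of f] split[of g] eqr by (auto split: if_splits)
  qed
  then show ?thesis unfolding trunc_def by auto
qed

lemma map_eq_elem: "map f xs = map g xs \<Longrightarrow> x \<in> set xs \<Longrightarrow> f x = g x"
  by (simp add: map_eq_conv)

theorem theorem2:
  fixes K F Z S Z' N :: nat and P :: "nat \<Rightarrow> nat \<Rightarrow> nat option"
  assumes "0 < K" and "0 < F" and "0 < Z" and "0 < S"
    and "is_PDA K F Z S P"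
    and "\<forall>k<K. card {j. j < F \<and> useless_star K F S P j k} = Z'"
  shows "\<exists>M B cache tr.
           M = real N * ((real Z - real Z') / (real F - real Z')) \<and>
           coded_caching_scheme K M N (F - Z') B S cache tr \<and>
           transmission_rate (F - Z') S = real S / (real F - real Z') \<and>
           xor_delivery K N B S cache tr (occurrences K F P)"
proof -
  note pda = assms(5)[unfolded is_PDA_def]
  have P1: "s < S" if "j < F" "k < K" "P j k = Some s" for j k s using pda that by blast
  have P2: "card {j. j < F \<and> P j k = None} = Z" if "k < K" for k using pda that by blast
  have P3: "\<exists>j<F. \<exists>k<K. P j k = Some s" if "s < S" for s using pda that by blast
  have P4: "j1 \<noteq> j2 \<and> k1 \<noteq> k2 \<and> P j1 k2 = None \<and> P j2 k1 = None"
    if "j1 < F" "k1 < K" "j2 < F" "k2 < K" "(j1, k1) \<noteq> (j2, k2)" "P j1 k1 = Some s" "P j2 k2 = Some s"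
    for j1 k1 j2 k2 s
  proof -
    have "\<forall>j1<F. \<forall>k1<K. \<forall>j2<F. \<forall>k2<K. \<forall>s.
        (j1, k1) \<noteq> (j2, k2) \<and> P j1 k1 = Some s \<and> P j2 k2 = Some s \<longrightarrow>
        j1 \<noteq> j2 \<and> k1 \<noteq> k2 \<and> P j1 k2 = None \<and> P j2 k1 = None" using pda by blast
    then show ?thesis using that by blast
  qed
  define Sk where "Sk k = {j. j < F \<and> useful_star K F S P j k}" for k
  define Ik where "Ik k = {j. j < F \<and> P j k \<noteq> None}" for k
  define Ul where "Ul k = {j. j < F \<and> useless_star K F S P j k}" for k
  define St where "St k = {j. j < F \<and> P j k = None}" for k
  have finSk: "finite (Sk k)" for k unfolding Sk_def by auto
  have SkF: "Sk k \<subseteq> {..<F}" for k unfolding Sk_def by auto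
  have IkF: "Ik k \<subseteq> {..<F}" for k unfolding Ik_def by auto
  have cardSt: "card (Sk k) + Z' = Z" if "k < K" for k
  proof -
    have "St k = Sk k \<union> Ul k" unfolding St_def Sk_def Ul_def useless_star_def useful_star_def by auto
    moreover have "Sk k \<inter> Ul k = {}" unfolding Sk_def Ul_def useless_star_def by auto
    ultimately have "card (St k) = card (Sk k) + card (Ul k)"
      by (simp add: card_Un_disjoint finSk Ul_def)
    then show ?thesis using P2[OF that] assms(6) that unfolding St_def Ul_def by simp
  qed
  have cardIk: "card (Ik k) = F - Z" if "k < K" for k
  proof -
    have "Ik k = {..<F} - St k" unfolding Ik_def St_def by auto
    moreover have "St k \<subseteq> {..<F}" unfolding St_def by auto
    ultimately show ?thesis using P2[OF that] unfolding St_def[symmetric]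
      by (simp add: card_Diff_subset finite_subset)
  qed
  obtain j00 k00 where jk00: "j00 < F" "k00 < K" "P j00 k00 = Some 0" using P3 assms(4) by blast
  have ZF: "Z < F"
  proof -
    have "St k00 \<subseteq> {..<F} - {j00}" unfolding St_def using jk00 by auto
    then have "card (St k00) \<le> card ({..<F} - {j00})" by (intro card_mono) auto
    then show ?thesis using P2[OF jk00(2)] jk00(1) unfolding St_def by simp
  qed
  have Z'Z: "Z' \<le> Z" using cardSt[OF assms(1)] by simp
  define Fd where "Fd = F - Z'"
  have Fd0: "0 < Fd" using ZF Z'Z Fd_def by simp
  have cardR: "card (Sk k \<union> Ik k) = Fd" if "k < K" for k
  proof -
    have "Sk k \<inter> Ik k = {}" unfolding Sk_def Ik_def useful_star_def by auto
    then have "card (Sk k \<union> Ik k) = card (Sk k) + card (Ik k)"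
      by (simp add: card_Un_disjoint finSk finite_subset[OF IkF])
    then show ?thesis using cardSt[OF that] cardIk[OF that] ZF Fd_def by simp
  qed
  obtain B and v :: "nat \<Rightarrow> pfile \<Rightarrow> packet" where B0: "0 < B"
    and vA: "\<And>j w. trunc B (v j w) = v j w"
    and vC: "\<And>R w w'. R \<subseteq> {..<F} \<Longrightarrow> card R = Fd \<Longrightarrow> (\<forall>j\<in>R. v j w = v j w') \<Longrightarrow> file_eq Fd B w w'"
    and vD: "\<And>Sx j0. Sx \<subseteq> {..<F} \<Longrightarrow> j0 < F \<Longrightarrow> j0 \<notin> Sx \<Longrightarrow> card Sx < Fd \<Longrightarrow>
        (\<exists>w w'. (\<forall>j\<in>Sx. v j w = v j w') \<and> v j0 w \<noteq> v j0 w')"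
    using mds_exists[OF assms(2), of Fd] by blast
  define J where "J s k = (THE j. j < F \<and> P j k = Some s)" for s k
  have J_eq: "J s k = j" if "k < K" "j < F" "P j k = Some s" for s k j
    unfolding J_def
  proof (rule the_equality)
    show "j < F \<and> P j k = Some s" using that by simp
    fix j' assume "j' < F \<and> P j' k = Some s"
    then show "j' = j" using P4[of j' k j k s] that by auto
  qed
  define Us where "Us s = {k. k < K \<and> (\<exists>j<F. P j k = Some s)}" for s
  have Us_J: "J s k < F \<and> P (J s k) k = Some s" if "k \<in> Us s" for s k
    using that J_eq unfolding Us_def by auto
  have finUs: "finite (Us s)" for s unfolding Us_def by auto
  define cache where "cache k = concat (map (\<lambda>n. map (\<lambda>j. (n, v j)) (sorted_list_of_set (Sk k))) [0..<N])" for k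
  have setc: "x \<in> set (cache k) \<longleftrightarrow> (\<exists>n<N. \<exists>j\<in>Sk k. x = (n, v j))" for x k
    using finSk[of k] by (auto simp: cache_def)
  have lenc: "length (cache k) = N * card (Sk k)" for k
    unfolding cache_def by (simp add: length_concat comp_def sum_list_triv)
  define tr where "tr d s W = xor_sum (Us s) (\<lambda>k. v (J s k) (W (d k)))" for d s and W :: library
  have cacheeq: "v j (W n) = v j (W' n)"
    if "cache_view B (cache k) W = cache_view B (cache k) W'" "n < N" "j \<in> Sk k" for k W W' n j
  proof -
    have "(n, v j) \<in> set (cache k)" using setc that by blast
    from map_eq_elem[OF that(1)[unfolded cache_view_def] this]
    show ?thesis using vA by simp
  qed
  have det: "v (J s k') (W (d k')) = v (J s k') (W' (d k'))"
    if "valid_demand K N d" "k \<in> Us s" "k' \<in> Us s" "k' \<noteq> k"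
       "cache_view B (cache k) W = cache_view B (cache k) W'" for d s k k' W W'
  proof -
    have j: "J s k < F" "P (J s k) k = Some s" and j': "J s k' < F" "P (J s k') k' = Some s"
      using Us_J that(2,3) by auto
    have kK: "k < K" "k' < K" using that(2,3) Us_def by auto
    have "P (J s k') k = None" using P4[OF j'(1) kK(2) j(1) kK(1) _ j'(2) j(2)] that(4) by auto
    moreover have "s < S" using P1[OF j(1) kK(1) j(2)] .
    ultimately have "J s k' \<in> Sk k" unfolding Sk_def useful_star_def
      using j j' kK by blast
    moreover have "d k' < N" using that(1) kK unfolding valid_demand_def by simp
    ultimately show ?thesis using cacheeq that(5) by blast
  qed
  define M where "M = real N * ((real Z - real Z') / (real F - real Z'))"
  have realFd: "real Fd = real F - real Z'" using Fd_def ZF Z'Z by simp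
  have Mfd: "M * real Fd = real N * (real Z - real Z')"
    unfolding M_def realFd using ZF Z'Z by (simp add: field_simps)
  have part2: "coded_caching_scheme K M N Fd B S cache tr"
    unfolding coded_caching_scheme_def
  proof (intro conjI)
    show "0 < Fd" by (rule Fd0)
    show "0 < B" by (rule B0)
    show "\<forall>k<K. \<forall>(n, g) \<in> set (cache k). n < N" using setc by fastforce
    show "\<forall>k<K. real (length (cache k)) \<le> M * real Fd"
    proof (intro allI impI)
      fix k assume "k < K"
      then have "card (Sk k) = Z - Z'" using cardSt by (metis add_diff_cancel_right')
      then show "real (length (cache k)) \<le> M * real Fd" using Mfd lenc Z'Z by (simp add: of_nat_diff)
    qed
    show "\<forall>d. valid_demand K N d \<longrightarrow> (\<forall>k<K. \<forall>W W'. cache_view B (cache k) W = cache_view B (cache k) W' \<and>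
        signal_view B S (tr d) W = signal_view B S (tr d) W' \<longrightarrow> file_eq Fd B (W (d k)) (W' (d k)))"
    proof (rule allI, rule impI)
    fix d assume vd: "valid_demand K N d"
    show "\<forall>k<K. \<forall>W W'. cache_view B (cache k) W = cache_view B (cache k) W' \<and>
        signal_view B S (tr d) W = signal_view B S (tr d) W' \<longrightarrow> file_eq Fd B (W (d k)) (W' (d k))"
    proof (intro allI impI)
      fix k W W' assume kK: "k < K" and h: "cache_view B (cache k) W = cache_view B (cache k) W' \<and>
        signal_view B S (tr d) W = signal_view B S (tr d) W'"
      have dk: "d k < N" using vd kK unfolding valid_demand_def by simp
      have "\<forall>j\<in>Sk k \<union> Ik k. v j (W (d k)) = v j (W' (d k))"
      proof
        fix j assume "j \<in> Sk k \<union> Ik k"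
        then show "v j (W (d k)) = v j (W' (d k))"
        proof
          assume "j \<in> Sk k" then show ?thesis using cacheeq h dk by blast
        next
          assume "j \<in> Ik k"
          then obtain s where js: "j < F" "P j k = Some s" unfolding Ik_def by auto
          have sS: "s < S" using P1[OF js(1) kK js(2)] .
          have Jj: "J s k = j" using J_eq[OF kK js] .
          have kU: "k \<in> Us s" unfolding Us_def using kK js by auto
          have "trunc B (tr d s W) = trunc B (tr d s W')"
            using map_eq_elem[OF h[THEN conjunct2, unfolded signal_view_def], of s] sS by simp
          moreover have oth: "\<And>k'. k' \<in> Us s \<Longrightarrow> k' \<noteq> k \<Longrightarrow> v (J s k') (W (d k')) = v (J s k') (W' (d k'))"
            using det[OF vd kU _ _ h[THEN conjunct1]] by blast
          ultimately have "trunc B (v (J s k) (W (d k))) = trunc B (v (J s k) (W' (d k)))"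
            unfolding tr_def
            using xor_cancel[OF finUs kU, of "\<lambda>k. v (J s k) (W (d k))" "\<lambda>k. v (J s k) (W' (d k))"] by blast
          then show ?thesis using vA Jj by simp
        qed
      qed
      then show "file_eq Fd B (W (d k)) (W' (d k))"
        using vC[OF _ cardR[OF kK]] SkF IkF by blast
    qed
    qed
  qed
  have part3: "transmission_rate Fd S = real S / (real F - real Z')"
    unfolding transmission_rate_def realFd ..
  have part4: "xor_delivery K N B S cache tr (occurrences K F P)"
    unfolding xor_delivery_def
  proof (intro allI impI)
    fix d s assume vd: "valid_demand K N d" and sS: "s < S"
    show "\<exists>U (c :: nat \<Rightarrow> pfile \<Rightarrow> packet).
        U \<subseteq> {..<K} \<and> card U = occurrences K F P s \<and>
        (\<forall>W. trunc B (tr d s W) = trunc B (xor_sum U (\<lambda>k. c k (W (d k))))) \<and>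
        (\<forall>k\<in>U. \<exists>W W'. cache_view B (cache k) W = cache_view B (cache k) W' \<and>
                        trunc B (c k (W (d k))) \<noteq> trunc B (c k (W' (d k)))) \<and>
        (\<forall>k\<in>U. \<forall>k'\<in>U. k' \<noteq> k \<longrightarrow> (\<forall>W W'.
            cache_view B (cache k) W = cache_view B (cache k) W' \<longrightarrow>
            trunc B (c k' (W (d k'))) = trunc B (c k' (W' (d k')))))"
    proof (intro exI conjI)
      show "Us s \<subseteq> {..<K}" unfolding Us_def by auto
      have "{(j, k). j < F \<and> k < K \<and> P j k = Some s} = (\<lambda>k. (J s k, k)) ` Us s"
      proof
        show "{(j, k). j < F \<and> k < K \<and> P j k = Some s} \<subseteq> (\<lambda>k. (J s k, k)) ` Us s"
        proof
          fix x assume "x \<in> {(j, k). j < F \<and> k < K \<and> P j k = Some s}"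
          then obtain j k where x: "x = (j, k)" "j < F" "k < K" "P j k = Some s" by auto
          then have "k \<in> Us s" "J s k = j" using J_eq unfolding Us_def by auto
          then show "x \<in> (\<lambda>k. (J s k, k)) ` Us s" using x by force
        qed
        show "(\<lambda>k. (J s k, k)) ` Us s \<subseteq> {(j, k). j < F \<and> k < K \<and> P j k = Some s}"
          using Us_J unfolding Us_def by auto
      qed
      moreover have "inj_on (\<lambda>k. (J s k, k)) (Us s)" by (auto simp: inj_on_def)
      ultimately show "card (Us s) = occurrences K F P s"
        unfolding occurrences_def by (simp add: card_image)
      show "\<forall>W. trunc B (tr d s W) = trunc B (xor_sum (Us s) (\<lambda>k. v (J s k) (W (d k))))"
        unfolding tr_def by simp
      show "\<forall>k\<in>Us s. \<forall>k'\<in>Us s. k' \<noteq> k \<longrightarrow> (\<forall>W W'.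
            cache_view B (cache k) W = cache_view B (cache k) W' \<longrightarrow>
            trunc B (v (J s k') (W (d k'))) = trunc B (v (J s k') (W' (d k'))))"
        using det[OF vd] by metis
      show "\<forall>k\<in>Us s. \<exists>W W'. cache_view B (cache k) W = cache_view B (cache k) W' \<and>
                        trunc B (v (J s k) (W (d k))) \<noteq> trunc B (v (J s k) (W' (d k)))"
      proof
        fix k assume kU: "k \<in> Us s"
        have kK: "k < K" using kU Us_def by auto
        have j0: "J s k < F" "P (J s k) k = Some s" using Us_J[OF kU] by auto
        have nS: "J s k \<notin> Sk k" using j0 unfolding Sk_def useful_star_def by auto
        have "card (Sk k) < Fd" using cardSt[OF kK] ZF Fd_def by simp
        then obtain w w' where ww: "\<forall>j\<in>Sk k. v j w = v j w'" "v (J s k) w \<noteq> v (J s k) w'"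
          using vD[OF SkF j0(1) nS] by blast
        define W :: library where "W = (\<lambda>n. w)"
        define W' :: library where "W' = (\<lambda>n. if n = d k then w' else w)"
        have "cache_view B (cache k) W = cache_view B (cache k) W'"
          unfolding cache_view_def
        proof (rule map_cong[OF refl])
          fix x assume "x \<in> set (cache k)"
          then obtain n j where "x = (n, v j)" "j \<in> Sk k" using setc by blast
          then show "(case x of (n, g) \<Rightarrow> trunc B (g (W n))) = (case x of (n, g) \<Rightarrow> trunc B (g (W' n)))"
            using ww(1) unfolding W_def W'_def by auto
        qed
        moreover have "trunc B (v (J s k) (W (d k))) \<noteq> trunc B (v (J s k) (W' (d k)))"
          using ww(2) vA unfolding W_def W'_def by simp
        ultimately show "\<exists>W W'. cache_view B (cache k) W = cache_view B (cache k) W' \<and>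
                        trunc B (v (J s k) (W (d k))) \<noteq> trunc B (v (J s k) (W' (d k)))" by blast
      qed
    qed
  qed
  show ?thesis
    using part2 part3 part4 unfolding Fd_def M_def by blast
qed


end
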